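(* Let $(X,x_0)\cong(\mathbb{C}^n/\mathbb{Z}_r(1,a_1,\dots,a_{n-1}),0)$, where $r>0$ is an integer, $\gcd(a_1,r)=1$, and $a_j$ are integers with $0\le a_j<r$ for $1\le j\le n-1$. Let $l:=\min\{ i \mid 0<i\le r,\ a_j i\equiv i \pmod r \text{ for all } 1\le j\le n-1\}$. Let $\mu:Y\to X$ be the weighted blow up of $X$ at $x_0$ with weights $\mathrm{wt}(x_0,x_1,\dots,x_{n-1})=(l/r,l/r,\dots,l/r)$, with exceptional divisor $E$. Then \[\mathrm{w}\text{-}\mathrm{mult}_{\mu:x_0}X = r^{n-1}/l^n.\]
   Context: $\mathbb{C}^n/\mathbb{Z}_r(1,a_1,\dots,a_{n-1})$ denotes the quotient of $\mathbb{C}^n$ with coordinates $x_0,\dots,x_{n-1}$ by the cyclic group of order $r$ whose generator acts by $(x_0,x_1,\dots,x_{n-1})\mapsto(\zeta x_0,\zeta^{a_1}x_1,\dots,\zeta^{a_{n-1}}x_{n-1})$, $\zeta=e^{2\pi i/r}$. For the weighted blow up $\mu$ with weights $(l/r,\dots,l/r)$, $\mu_*\mathcal{O}_Y(-hE)$ (for integers $h\ge0$) is the ideal of $\mathcal{O}_{X,x_0}$ generated by the $\mathbb{Z}_r$-invariant monomials $x_0^{b_0}\cdots x_{n-1}^{b_{n-1}}$ with $\frac{l}{r}(b_0+\dots+b_{n-1})\ge h$. Weighted multiplicity: for a weighted blow up $\mu:Y\to X$ at $x_0$ with exceptional divisor $E$ and a subvariety $W\subseteq X$ of dimension $p$ normal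 at $x_0$ with strict transform $\bar W$, $\mathrm{w}\text{-}\mathrm{mult}_{\mu:x_0}W$ is the number such that $\dim_{\mathbb{C}}\mathcal{O}_{W,x_0}/\mu_*\mathcal{O}_{\bar W}(-hE|_{\bar W}) = \mathrm{w}\text{-}\mathrm{mult}_{\mu:x_0}W\cdot \frac{h^p}{p!}+(\text{lower order terms in } h)$. *)

theory Defs
  imports Complex_Main "HOL-Library.Landau_Symbols" "HOL-Number_Theory.Cong"
begin

text \<open>Monomials x_0^(b 0) ... x_(n-1)^(b (n-1)) in n variables, encoded as exponent
  functions vanishing outside {0..<n}.\<close>
definition monomials :: "nat \<Rightarrow> (nat \<Rightarrow> nat) set" where
  "monomials n = {b. \<forall>i\<ge>n. b i = 0}"

text \<open>Invariance of a monomial under the generator of Z_r acting with weights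
  (1, a_1, ..., a_(n-1)): the character is zeta^(b_0 + sum a_j b_j).\<close>
definition Zr_invariant :: "nat \<Rightarrow> nat \<Rightarrow> (nat \<Rightarrow> nat) \<Rightarrow> (nat \<Rightarrow> nat) \<Rightarrow> bool" where
  "Zr_invariant n r a b \<longleftrightarrow> [b 0 + (\<Sum>j\<in>{1..<n}. a j * b j) = 0] (mod r)"

definition l_index :: "nat \<Rightarrow> nat \<Rightarrow> (nat \<Rightarrow> nat) \<Rightarrow> nat" where
  "l_index n r a = (LEAST i. 0 < i \<and> i \<le> r \<and> (\<forall>j\<in>{1..<n}. [a j * i = i] (mod r)))"

text \<open>dim_C O_{X,x0} / mu_* O_Y(-hE) for the weighted blow up with weights (w,...,w):
  the ideal is generated by the invariant monomials of weighted degree \<ge> h, so the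
  quotient has as C-basis the invariant monomials of weighted degree < h.\<close>
definition colength_wbu :: "nat \<Rightarrow> nat \<Rightarrow> (nat \<Rightarrow> nat) \<Rightarrow> real \<Rightarrow> nat \<Rightarrow> nat" where
  "colength_wbu n r a w h =
     card {b \<in> monomials n. Zr_invariant n r a b \<and> w * real (\<Sum>i<n. b i) < real h}"

definition has_wmult :: "nat \<Rightarrow> (nat \<Rightarrow> nat) \<Rightarrow> real \<Rightarrow> bool" where
  "has_wmult p D c \<longleftrightarrow>
     (\<lambda>h. real (D h) - c * real h ^ p / fact p) \<in> o(\<lambda>h. real h ^ p)"

end

theory Submission
  imports Defs
begin

definition Scount :: "nat \<Rightarrow> nat \<Rightarrow> nat" where
  "Scount k m = card {xs::nat list. length xs = k \<and> sum_list xs < m}"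

lemma Sset_sub: "{xs::nat list. length xs = k \<and> sum_list xs < m} \<subseteq> {xs. set xs \<subseteq> {..<m} \<and> length xs = k}"
  using member_le_sum_list by fastforce

lemma Sset_finite: "finite {xs::nat list. length xs = k \<and> sum_list xs < m}"
  by (rule finite_subset[OF Sset_sub]) (simp add: finite_lists_length_eq)

lemma Scount_le: "Scount k m \<le> m ^ k"
proof -
  have "Scount k m \<le> card {xs. set xs \<subseteq> {..<m} \<and> length xs = k}"
    unfolding Scount_def by (rule card_mono[OF _ Sset_sub]) (simp add: finite_lists_length_eq)
  thus ?thesis by (simp add: card_lists_length_eq)
qed

lemma Scount_Suc: "Scount k (Suc m) = Scount k m + card {xs::nat list. length xs = k \<and> sum_list xs = m}"
proof -
  have "{xs::nat list. length xs = k \<and> sum_list xs < Suc m} =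
     {xs. length xs = k \<and> sum_list xs < m} \<union> {xs. length xs = k \<and> sum_list xs = m}" by auto
  moreover have "finite {xs::nat list. length xs = k \<and> sum_list xs = m}"
    by (rule finite_subset[OF _ Sset_finite[of k "Suc m"]]) auto
  ultimately show ?thesis unfolding Scount_def
    by (subst card_Un_disjoint[symmetric]) (auto simp: Sset_finite)
qed

lemma Scount_binom: assumes "k \<ge> 1" shows "Scount k m = (m + k - 1) choose k"
proof (induction m)
  case 0 then show ?case using assms by (simp add: Scount_def)
next
  case (Suc m)
  have "((Suc m + k - 1) choose k) = ((m + k - 1) choose k) + ((m + k - 1) choose (k - 1))"
    using assms by (cases k) auto
  also have "((m + k - 1) choose (k - 1)) = ((m + k - 1) choose m)"
    using assms by (subst binomial_symmetric) auto
  finally show ?case using Suc by (simp add: Scount_Suc card_length_sum_list)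
qed

lemma Scount_real: assumes "k \<ge> 1" shows "real (Scount k m) = pochhammer (real m) k / fact k"
proof -
  have "real (Scount k m) = real (m + k - 1) gchoose k"
    using Scount_binom[OF assms] binomial_gbinomial by metis
  also have "\<dots> = pochhammer (real m) k / fact k"
    using assms by (simp add: gbinomial_pochhammer' of_nat_diff)
  finally show ?thesis .
qed

lemma Scount_bounds: assumes "k \<ge> 1"
  shows "real m ^ k / fact k \<le> real (Scount k m)" "real (Scount k m) \<le> (real m + real k) ^ k / fact k"
proof -
  have p: "pochhammer (real m) k = (\<Prod>i<k. real m + real i)"
    by (simp add: pochhammer_prod atLeast0LessThan)
  have "real m ^ k = (\<Prod>i<k. real m)" by simp
  also have "\<dots> \<le> (\<Prod>i<k. real m + real i)" by (rule prod_mono) auto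
  finally show "real m ^ k / fact k \<le> real (Scount k m)"
    using Scount_real[OF assms] p by (simp add: divide_right_mono)
  have "(\<Prod>i<k. real m + real i) \<le> (\<Prod>i<k. real m + real k)" by (rule prod_mono) auto
  also have "\<dots> = (real m + real k) ^ k" by simp
  finally show "real (Scount k m) \<le> (real m + real k) ^ k / fact k"
    using Scount_real[OF assms] p by (simp add: divide_right_mono)
qed

lemma resid_card_upper:
  fixes r L g :: nat assumes "r > 0"
  shows "real (card {x. x < L \<and> [x + g = 0] (mod r)}) \<le> real L / real r + 1"
proof (cases "L = 0")
  case True then show ?thesis by simp
next
  case False
  let ?A = "{x. x < L \<and> [x + g = 0] (mod r)}"
  have inj: "inj_on (\<lambda>x. x div r) ?A"
  proof (rule inj_onI)
    fix x y assume x: "x \<in> ?A" and y: "y \<in> ?A" and e: "x div r = y div r"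
    have "[x + g = y + g] (mod r)" using x y by (auto intro: cong_sym cong_trans)
    hence "[x = y] (mod r)" by (simp add: cong_add_rcancel_nat)
    hence "x mod r = y mod r" by (simp add: unique_euclidean_semiring_class.cong_def)
    with e show "x = y" by (metis div_mult_mod_eq)
  qed
  have sub: "(\<lambda>x. x div r) ` ?A \<subseteq> {..(L - 1) div r}"
  proof (rule image_subsetI)
    fix x assume "x \<in> ?A"
    hence "x \<le> L - 1" by auto
    thus "x div r \<in> {..(L - 1) div r}" by (simp add: div_le_mono)
  qed
  have "card ?A = card ((\<lambda>x. x div r) ` ?A)" using card_image[OF inj] by simp
  also have "\<dots> \<le> card {..(L - 1) div r}" by (rule card_mono[OF _ sub]) simp
  finally have "card ?A \<le> Suc ((L - 1) div r)" by simp
  hence "real (card ?A) \<le> real ((L - 1) div r) + 1" by simp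
  also have "real ((L - 1) div r) \<le> real (L - 1) / real r"
  proof -
    have "((L - 1) div r) * r \<le> L - 1" by simp
    hence "real ((L - 1) div r) * real r \<le> real (L - 1)" by (metis of_nat_le_iff of_nat_mult)
    thus ?thesis using assms by (simp add: field_simps)
  qed
  also have "\<dots> \<le> real L / real r" using assms by (simp add: divide_right_mono)
  finally show ?thesis by simp
qed

lemma resid_card_lower:
  fixes r L g :: nat assumes "r > 0"
  shows "real L / real r - 1 \<le> real (card {x. x < L \<and> [x + g = 0] (mod r)})"
proof -
  let ?A = "{x. x < L \<and> [x + g = 0] (mod r)}"
  define c where "c = (r - g mod r) mod r"
  have cr: "c < r" using assms by (simp add: c_def)
  have cg: "(c + g) mod r = 0"
  proof (cases "g mod r = 0")
    case True then show ?thesis by (simp add: c_def)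
  next
    case False
    hence "c = r - g mod r" using assms by (simp add: c_def)
    hence "c + g = r + (g div r) * r" using mod_less_divisor[OF assms, of g]
      by (metis add.commute div_mult_mod_eq le_add_diff_inverse2 less_imp_le add.assoc)
    thus ?thesis by simp
  qed
  have sub: "(\<lambda>q. q * r + c) ` {..<L div r} \<subseteq> ?A"
  proof
    fix y assume "y \<in> (\<lambda>q. q * r + c) ` {..<L div r}"
    then obtain q where q: "q < L div r" "y = q * r + c" by auto
    have "Suc q * r \<le> (L div r) * r" using q(1) by (intro mult_le_mono1) simp
    also have "\<dots> \<le> L" by simp
    finally have "y < L" using q(2) cr by simp
    moreover have "[y + g = 0] (mod r)"
    proof -
      have "(y + g) mod r = ((c + g) + q * r) mod r" using q(2) by (simp add: algebra_simps)
      also have "\<dots> = (c + g) mod r" by (rule mod_mult_self1)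
      finally have "(y + g) mod r = (c + g) mod r" .
      thus ?thesis using cg by (simp add: unique_euclidean_semiring_class.cong_def)
    qed
    ultimately show "y \<in> ?A" by simp
  qed
  have inj: "inj_on (\<lambda>q. q * r + c) {..<L div r}" using assms by (auto intro!: inj_onI)
  have fin: "finite ?A" by (rule finite_subset[of _ "{..<L}"]) auto
  have "L div r \<le> card ?A" using card_mono[OF fin sub] card_image[OF inj] by simp
  moreover have "real L / real r - 1 \<le> real (L div r)"
  proof -
    have "real L = real (L div r) * real r + real (L mod r)"
      by (metis div_mult_mod_eq of_nat_add of_nat_mult)
    moreover have "real (L mod r) < real r" using assms by simp
    ultimately have "real L < (real (L div r) + 1) * real r" by (simp add: algebra_simps)
    thus ?thesis using assms by (simp add: field_simps)
  qed
  ultimately show ?thesis by linarith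
qed

lemma split_card:
  "card {xs. length xs = Suc k \<and> P xs} = card (SIGMA ys:{ys. length ys = k}. {x. P (x # ys)})"
proof -
  have "{xs. length xs = Suc k \<and> P xs} = (\<lambda>(ys,x). x # ys) ` (SIGMA ys:{ys. length ys = k}. {x. P (x # ys)})"
  proof (intro equalityI subsetI)
    fix xs assume "xs \<in> {xs. length xs = Suc k \<and> P xs}"
    then show "xs \<in> (\<lambda>(ys,x). x # ys) ` (SIGMA ys:{ys. length ys = k}. {x. P (x # ys)})"
      by (cases xs) (auto intro!: image_eqI)
  qed auto
  moreover have "inj_on (\<lambda>(ys,x). x # ys) (SIGMA ys:{ys. length ys = k}. {x. P (x # ys)})"
    by (auto intro!: inj_onI)
  ultimately show ?thesis by (simp add: card_image)
qed

lemma main_count: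
  fixes r m k :: nat and a :: "nat \<Rightarrow> nat"
  assumes "r > 0"
  shows "\<bar>real (card {xs. length xs = Suc k \<and> sum_list xs < m \<and>
            [xs!0 + (\<Sum>j\<in>{1..<Suc k}. a j * xs!j) = 0] (mod r)}) - real (Scount (Suc k) m) / real r\<bar>
         \<le> real m ^ k"
proof -
  define Y where "Y = {ys::nat list. length ys = k \<and> sum_list ys < m}"
  define G where "G ys = (\<Sum>j\<in>{1..<Suc k}. a j * ys!(j - 1))" for ys :: "nat list"
  define R where "R ys = {x. x < m - sum_list ys \<and> [x + G ys = 0] (mod r)}" for ys
  have finY: "finite Y" unfolding Y_def by (rule Sset_finite)
  have finR: "finite (R ys)" for ys unfolding R_def by (rule finite_subset[of _ "{..<m - sum_list ys}"]) auto
  have cY: "card Y = Scount k m" unfolding Y_def Scount_def ..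
  have Geq: "(\<Sum>j\<in>{1..<Suc k}. a j * (x # ys)!j) = G ys" for x ys
    unfolding G_def by (rule sum.cong) (auto simp: nth_Cons')
  have "(SIGMA ys:{ys. length ys = k}. {x. sum_list (x # ys) < m \<and>
            [(x # ys)!0 + (\<Sum>j\<in>{1..<Suc k}. a j * (x # ys)!j) = 0] (mod r)}) = Sigma Y R"
    unfolding Y_def R_def using Geq by auto
  hence c1: "card {xs. length xs = Suc k \<and> sum_list xs < m \<and>
            [xs!0 + (\<Sum>j\<in>{1..<Suc k}. a j * xs!j) = 0] (mod r)} = (\<Sum>ys\<in>Y. card (R ys))"
    using split_card[of k "\<lambda>xs. sum_list xs < m \<and> [xs!0 + (\<Sum>j\<in>{1..<Suc k}. a j * xs!j) = 0] (mod r)"]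
    by (simp add: finY finR)
  have "(SIGMA ys:{ys. length ys = k}. {x. sum_list (x # ys) < m}) = (SIGMA ys:Y. {..< m - sum_list ys})"
    unfolding Y_def by auto
  hence c2: "Scount (Suc k) m = (\<Sum>ys\<in>Y. m - sum_list ys)"
    unfolding Scount_def using split_card[of k "\<lambda>xs. sum_list xs < m"]
    by (simp add: finY)
  have b: "\<bar>real (card (R ys)) - real (m - sum_list ys) / real r\<bar> \<le> 1" for ys
    using resid_card_upper[OF assms, of "m - sum_list ys" "G ys"]
      resid_card_lower[OF assms, of "m - sum_list ys" "G ys"] unfolding R_def by linarith
  have "real (Scount (Suc k) m) / real r = (\<Sum>ys\<in>Y. real (m - sum_list ys) / real r)"
    unfolding c2 by (simp add: sum_divide_distrib)
  hence "\<bar>real (\<Sum>ys\<in>Y. card (R ys)) - real (Scount (Suc k) m) / real r\<bar>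
      = \<bar>\<Sum>ys\<in>Y. (real (card (R ys)) - real (m - sum_list ys) / real r)\<bar>"
    by (simp add: sum_subtractf)
  also have "\<dots> \<le> (\<Sum>ys\<in>Y. \<bar>real (card (R ys)) - real (m - sum_list ys) / real r\<bar>)"
    by (rule sum_abs)
  also have "\<dots> \<le> (\<Sum>ys\<in>Y. 1)" by (rule sum_mono) (rule b)
  also have "\<dots> = real (Scount k m)" using cY by simp
  also have "\<dots> \<le> real m ^ k" using Scount_le[of k m] by (metis of_nat_le_iff of_nat_power)
  finally show ?thesis using c1 by simp
qed

lemma pow_diff_le:
  fixes y d :: real assumes "y \<ge> 0" "d \<ge> 0"
  shows "(y + d) ^ Suc k - y ^ Suc k \<le> real (Suc k) * d * (y + d) ^ k"
proof (induction k)
  case 0 then show ?case by simp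
next
  case (Suc k)
  have "(y + d) ^ Suc (Suc k) - y ^ Suc (Suc k) = (y + d) * ((y + d) ^ Suc k - y ^ Suc k) + d * y ^ Suc k"
    by (simp add: algebra_simps)
  also have "\<dots> \<le> (y + d) * (real (Suc k) * d * (y + d) ^ k) + d * (y + d) ^ Suc k"
    using assms Suc by (intro add_mono mult_left_mono power_mono) auto
  also have "\<dots> = real (Suc (Suc k)) * d * (y + d) ^ Suc k" by (simp add: algebra_simps)
  finally show ?case .
qed

lemma colength_eq:
  fixes n r m h :: nat and w :: real
  assumes "n \<ge> 1" and "\<And>s::nat. w * real s < real h \<longleftrightarrow> s < m"
  shows "colength_wbu n r a w h = card {xs. length xs = n \<and> sum_list xs < m \<and>
            [xs!0 + (\<Sum>j\<in>{1..<n}. a j * xs!j) = 0] (mod r)}"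
proof -
  let ?A = "{b \<in> monomials n. Zr_invariant n r a b \<and> w * real (\<Sum>i<n. b i) < real h}"
  let ?B = "{xs. length xs = n \<and> sum_list xs < m \<and> [xs!0 + (\<Sum>j\<in>{1..<n}. a j * xs!j) = 0] (mod r)}"
  let ?f = "\<lambda>b. map b [0..<n]"
  have sumeq: "sum_list (map b [0..<n]) = (\<Sum>i<n. b i)" for b :: "nat \<Rightarrow> nat"
    by (simp add: sum_list_distinct_conv_sum_set atLeast0LessThan)
  have inj: "inj_on ?f ?A"
  proof (rule inj_onI)
    fix b b' assume "b \<in> ?A" "b' \<in> ?A" "?f b = ?f b'"
    then show "b = b'"
      by (auto simp: monomials_def fun_eq_iff map_eq_conv)
  qed
  have img: "?f ` ?A = ?B"
  proof (intro equalityI subsetI)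
    fix xs assume "xs \<in> ?f ` ?A"
    then obtain b where b: "b \<in> ?A" "xs = ?f b" by auto
    have s: "(\<Sum>j\<in>{1..<n}. a j * xs!j) = (\<Sum>j\<in>{1..<n}. a j * b j)"
      using b(2) by (intro sum.cong) auto
    have len: "length xs = n" using b(2) by simp
    have "w * real (\<Sum>i<n. b i) < real h" using b(1) by blast
    hence "(\<Sum>i<n. b i) < m" using assms(2) by blast
    hence sl: "sum_list xs < m" using sumeq[of b] b(2) by simp
    have x0: "xs ! 0 = b 0" using b(2) assms(1) by simp
    have "[b 0 + (\<Sum>j\<in>{1..<n}. a j * b j) = 0] (mod r)" using b(1) by (simp add: Zr_invariant_def)
    hence "[xs ! 0 + (\<Sum>j\<in>{1..<n}. a j * xs ! j) = 0] (mod r)" using x0 s by simp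
    then show "xs \<in> ?B" using len sl by simp
  next
    fix xs assume xs: "xs \<in> ?B"
    define b where "b i = (if i < n then xs ! i else 0)" for i
    have fb: "?f b = xs" using xs by (intro nth_equalityI) (auto simp: b_def)
    have s: "(\<Sum>j\<in>{1..<n}. a j * xs!j) = (\<Sum>j\<in>{1..<n}. a j * b j)"
      by (intro sum.cong) (auto simp: b_def)
    have mono: "b \<in> monomials n" by (simp add: monomials_def b_def)
    have sm: "(\<Sum>i<n. b i) = sum_list xs" using sumeq[of b] fb by simp
    have "(\<Sum>i<n. b i) < m" using xs sm by simp
    hence w: "w * real (\<Sum>i<n. b i) < real h" using assms(2) by blast
    have b0: "b 0 = xs ! 0" using assms(1) by (simp add: b_def)
    have "Zr_invariant n r a b" unfolding Zr_invariant_def using xs s b0 by simp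
    hence "b \<in> ?A" using mono w by blast
    then show "xs \<in> ?f ` ?A" using fb by force
  qed
  show ?thesis unfolding colength_wbu_def using card_image[OF inj] img by simp
qed

theorem theorem2p5:
  fixes n r :: nat and a :: "nat \<Rightarrow> nat"
  assumes "n \<ge> 2" and "r > 0"
    and "coprime (a 1) r"
    and "\<forall>j\<in>{1..<n}. a j < r"
  shows "has_wmult n (colength_wbu n r a (real (l_index n r a) / real r))
           (real r ^ (n - 1) / real (l_index n r a) ^ n)"
proof -
  define l where "l = l_index n r a"
  define k where "k = n - 1"
  have nk: "n = Suc k" using assms(1) by (simp add: k_def)
  have "0 < l \<and> l \<le> r \<and> (\<forall>j\<in>{1..<n}. [a j * l = l] (mod r))"
    unfolding l_def l_index_def
    by (rule LeastI[of _ r]) (use assms(2) in \<open>auto simp: unique_euclidean_semiring_class.cong_def\<close>)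
  hence l1: "l \<ge> 1" and lr: "l \<le> r" by auto
  define w where "w = real l / real r"
  have wpos: "w > 0" using l1 assms(2) by (simp add: w_def)
  define x where "x h = real h * real r / real l" for h :: nat
  define m where "m h = nat \<lceil>x h\<rceil>" for h
  have x0: "x h \<ge> 0" for h by (simp add: x_def)
  have iff: "w * real s < real h \<longleftrightarrow> s < m h" for s h
  proof -
    have "w * real s < real h \<longleftrightarrow> real s < x h"
      using wpos l1 assms(2) by (simp add: w_def x_def field_simps)
    also have "\<dots> \<longleftrightarrow> \<not> (\<lceil>x h\<rceil> \<le> int s)" by (simp add: ceiling_le_iff not_le)
    also have "\<dots> \<longleftrightarrow> s < m h" using x0[of h] by (auto simp: m_def)
    finally show ?thesis .
  qed
  have mx1: "x h \<le> real (m h)" for h unfolding m_def using x0[of h]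
    by (simp add: le_of_int_ceiling)
  have mx2: "real (m h) \<le> x h + 1" for h unfolding m_def using x0[of h]
    by (simp add: of_nat_nat ceiling_correct less_imp_le)
  define D where "D h = real (colength_wbu n r a w h) - real r ^ (n - 1) / real l ^ n * real h ^ n / fact n" for h
  define K where "K = (real n * (real n + 1) + 1) * (real r + real n + 1) ^ k"
  have Kpos: "K > 0" unfolding K_def by (intro mult_pos_pos) (auto intro: add_nonneg_pos)
  have bound: "\<bar>D h\<bar> \<le> K * real h ^ k" if h1: "h \<ge> 1" for h
  proof -
    let ?C = "real (colength_wbu n r a w h)"
    let ?S = "real (Scount n (m h))"
    have C: "\<bar>?C - ?S / real r\<bar> \<le> real (m h) ^ k"
      using colength_eq[of n w h "m h" r a] iff main_count[OF assms(2), of k "m h" a] nk by simp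
    have T: "real r ^ (n - 1) / real l ^ n * real h ^ n / fact n = x h ^ n / (real r * fact n)"
    proof -
      have r0: "real r \<noteq> 0" and l0: "real l \<noteq> 0" using assms(2) l1 by auto
      show ?thesis unfolding x_def nk power_divide power_mult_distrib using r0 l0
        by (simp add: field_simps del: fact_Suc)
    qed
    define y where "y = x h"
    define e where "e = real n + 1"
    define Q where "Q = real r * fact n"
    have y0: "y \<ge> 0" using x0 by (simp add: y_def)
    have Q1: "Q \<ge> 1"
    proof -
      have r1: "real r \<ge> 1" using assms(2) by simp
      have f1: "(fact n :: real) \<ge> 1" by (rule fact_ge_1)
      show ?thesis unfolding Q_def using mult_mono[OF r1 f1] by simp
    qed
    have Qpos: "Q > 0" using Q1 by simp
    have S1: "y ^ n / fact n \<le> ?S"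
    proof -
      have "y ^ n \<le> real (m h) ^ n" using mx1[of h] y0 by (intro power_mono) (auto simp: y_def)
      hence "y ^ n / fact n \<le> real (m h) ^ n / fact n" by (simp add: divide_right_mono)
      thus ?thesis using Scount_bounds(1)[of n "m h"] nk by simp
    qed
    have S2: "?S \<le> (y + e) ^ n / fact n"
    proof -
      have "real (m h) + real n \<le> y + e" using mx2[of h] by (simp add: y_def e_def)
      hence "(real (m h) + real n) ^ n \<le> (y + e) ^ n" by (intro power_mono) auto
      hence "(real (m h) + real n) ^ n / fact n \<le> (y + e) ^ n / fact n" by (simp add: divide_right_mono)
      thus ?thesis using Scount_bounds(2)[of n "m h"] nk by simp
    qed
    have mk: "real (m h) ^ k \<le> (y + e) ^ k"
      using mx2[of h] y0 by (intro power_mono) (auto simp: y_def e_def)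
    have De: "D h = ?C - y ^ n / Q" unfolding D_def T y_def Q_def by (rule refl)
    have up1: "?C \<le> (y + e) ^ n / Q + (y + e) ^ k"
    proof -
      have "?S / real r \<le> (y + e) ^ n / Q" using S2 assms(2) by (simp add: Q_def field_simps)
      thus ?thesis using C mk by linarith
    qed
    have lo1: "y ^ n / Q - (y + e) ^ k \<le> ?C"
    proof -
      have "y ^ n / Q \<le> ?S / real r" using S1 assms(2) by (simp add: Q_def field_simps)
      thus ?thesis using C mk by linarith
    qed
    have pd: "(y + e) ^ n - y ^ n \<le> real n * e * (y + e) ^ k"
      using pow_diff_le[OF y0, of e k] nk by (simp add: e_def)
    have dnn: "0 \<le> (y + e) ^ n - y ^ n" using y0 by (simp add: e_def power_mono)
    have "(y + e) ^ n / Q - y ^ n / Q = ((y + e) ^ n - y ^ n) / Q" by (simp add: diff_divide_distrib)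
    also have "\<dots> \<le> (y + e) ^ n - y ^ n" using dnn Q1 by (simp add: divide_le_eq mult_le_cancel_left1)
    finally have "D h \<le> real n * e * (y + e) ^ k + (y + e) ^ k" using De up1 pd by linarith
    moreover have "- ((y + e) ^ k) \<le> D h" using De lo1 by linarith
    moreover have "0 \<le> real n * e * (y + e) ^ k" using y0 by (simp add: e_def)
    ultimately have Dabs: "\<bar>D h\<bar> \<le> (real n * e + 1) * (y + e) ^ k" by (simp add: algebra_simps abs_le_iff)
    have "y \<le> real h * real r"
    proof -
      have P0: "0 \<le> real h * real r" by simp
      have L1: "1 \<le> real l" using l1 by simp
      have "real h * real r * 1 \<le> real h * real r * real l" by (rule mult_left_mono[OF L1 P0])
      hence "real h * real r / real l \<le> real h * real r" using L1 by (simp add: divide_le_eq)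
      thus ?thesis by (simp add: y_def x_def)
    qed
    moreover have "e \<le> real h * (real n + 1)" using h1 by (simp add: e_def)
    ultimately have "y + e \<le> real h * (real r + real n + 1)" by (simp add: algebra_simps)
    hence "(y + e) ^ k \<le> (real h * (real r + real n + 1)) ^ k" using y0 by (intro power_mono) (auto simp: e_def)
    hence "(real n * e + 1) * (y + e) ^ k \<le> (real n * e + 1) * ((real h * (real r + real n + 1)) ^ k)"
      by (intro mult_left_mono) (auto simp: e_def)
    also have "\<dots> = K * real h ^ k" unfolding K_def e_def power_mult_distrib by (simp only: mult_ac)
    finally show ?thesis using Dabs by linarith
  qed
  have "D \<in> o(\<lambda>h. real h ^ n)"
  proof (rule landau_o.smallI)
    fix c :: real assume c: "c > 0"
    have "eventually (\<lambda>h. h \<ge> nat \<lceil>K / c\<rceil> + 1) at_top" by (rule eventually_ge_at_top)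
    then show "eventually (\<lambda>h. norm (D h) \<le> c * norm (real h ^ n)) at_top"
    proof eventually_elim
      case (elim h)
      have h1: "h \<ge> 1" using elim by simp
      have "K / c \<le> real h" using elim by linarith
      hence Kc: "K \<le> c * real h" using c by (simp add: divide_le_eq mult.commute)
      have "norm (D h) \<le> K * real h ^ k" using bound[OF h1] by simp
      also have "\<dots> \<le> c * real h * real h ^ k" using Kc by (intro mult_right_mono) auto
      also have "\<dots> = c * norm (real h ^ n)" by (simp add: nk)
      finally show ?case .
    qed
  qed
  thus ?thesis unfolding has_wmult_def D_def w_def l_def by (simp add: field_simps)
qed

end
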